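(* Let $\mathrm{SO}_2(\mathbb C)$ act on $M_2(\mathbb C)$ by left multiplication. For $M\in M_2(\mathbb C)$ set $\delta(M)=\det M$, $t(M)=\tfrac12\operatorname{tr}(M^tM)$, and define $a(M),b(M)$ by $M^tM-t(M)I=\begin{pmatrix}a(M)&b(M)\\ b(M)&-a(M)\end{pmatrix}$. Let $f=\delta^2-t^2+a^2+b^2\in\mathbb C[\delta,t,a,b]$, $R=(\mathbb C[\delta,t,a,b]/(f))_\delta$ and $U=\operatorname{Spec}(R)$. Then $U$ is a rational quotient for the left action of $\mathrm{SO}_2(\mathbb C)$ on $M_2(\mathbb C)$, i.e. the map $M\mapsto(\delta,t,a,b)$ induces an isomorphism $\mathbb C(U)\cong\mathbb C(M_2(\mathbb C))^{\mathrm{SO}_2(\mathbb C)}$. Moreover, for the induced action of $\mathrm{PSO}_2(\mathbb C)=\mathrm{SO}_2(\mathbb C)/\{\pm I\}$ on $U$ coming from the right action $M\mapsto Mh^{-1}$, identified with $\mathrm{SO}_2(\mathbb C)$ via $\pm h\mapsto h^2$, the group acts trivially on $\delta$ and $t$ and acts on the column vector $(a,b)^t$ by left multiplication.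
   Context: $\mathrm{SO}_2(\mathbb C)=\left\{\begin{pmatrix}x&y\\-y&x\end{pmatrix}: x^2+y^2=1\right\}$. For a group acting on a variety $X$, a rational quotient is a variety $Y$ whose function field is isomorphic to the field of invariant rational functions on $X$. The group $\mathrm{SO}_2(\mathbb C)\times\mathrm{SO}_2(\mathbb C)$ acts on $M_2(\mathbb C)$ by $(g,h)\cdot M=gMh^{-1}$, so the right factor acts on the quotient by the left factor, and $-I$ in the right factor acts on it trivially. *)

theory Defs
  imports "HOL-Analysis.Analysis"
begin

inductive poly_fun :: "('v \<Rightarrow> complex) set \<Rightarrow> ('v \<Rightarrow> complex) \<Rightarrow> bool"
  for C :: "('v \<Rightarrow> complex) set" where
  const: "poly_fun C (\<lambda>_. c)"
| coord: "x \<in> C \<Longrightarrow> poly_fun C x"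
| add: "poly_fun C p \<Longrightarrow> poly_fun C q \<Longrightarrow> poly_fun C (\<lambda>v. p v + q v)"
| mult: "poly_fun C p \<Longrightarrow> poly_fun C q \<Longrightarrow> poly_fun C (\<lambda>v. p v * q v)"

text \<open>Polynomial functions on M_2(C) (coordinates = matrix entries) and on
  C^4 = Spec C[delta,t,a,b] (coordinates x$1 = delta, x$2 = t, x$3 = a, x$4 = b).\<close>
definition poly_M2 :: "(complex^2^2 \<Rightarrow> complex) \<Rightarrow> bool" where
  "poly_M2 = poly_fun {(\<lambda>M. M $ i $ j) | i j. True}"

definition poly_C4 :: "(complex^4 \<Rightarrow> complex) \<Rightarrow> bool" where
  "poly_C4 = poly_fun {(\<lambda>x. x $ i) | i. True}"

definition SO2 :: "(complex^2^2) set" where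
  "SO2 = {g. g $ 1 $ 1 = g $ 2 $ 2 \<and> g $ 1 $ 2 = - (g $ 2 $ 1) \<and>
             (g $ 1 $ 1)^2 + (g $ 1 $ 2)^2 = 1}"

definition delta :: "complex^2^2 \<Rightarrow> complex" where
  "delta M = det M"

definition tt :: "complex^2^2 \<Rightarrow> complex" where
  "tt M = trace (transpose M ** M) / 2"

definition aa :: "complex^2^2 \<Rightarrow> complex" where
  "aa M = (transpose M ** M - mat (tt M)) $ 1 $ 1"

definition bb :: "complex^2^2 \<Rightarrow> complex" where
  "bb M = (transpose M ** M - mat (tt M)) $ 1 $ 2"

definition phi :: "complex^2^2 \<Rightarrow> complex^4" where
  "phi M = vector [delta M, tt M, aa M, bb M]"

definition ff :: "complex^4 \<Rightarrow> complex" where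
  "ff x = (x $ 1)^2 - (x $ 2)^2 + (x $ 3)^2 + (x $ 4)^2"

end

theory Submission
  imports Defs "HOL-Computational_Algebra.Polynomial"
begin


lemma mat2_eq: "(A::'a^2^2) = B \<longleftrightarrow> A$1$1=B$1$1 \<and> A$1$2=B$1$2 \<and> A$2$1=B$2$1 \<and> A$2$2=B$2$2"
  by (auto simp: vec_eq_iff forall_2)

lemma vec4_eq: "(x::'a^4) = y \<longleftrightarrow> x$1=y$1 \<and> x$2=y$2 \<and> x$3=y$3 \<and> x$4=y$4"
  by (auto simp: vec_eq_iff forall_4)

lemma vector_4 [simp]:
 "(vector [x,y,z,w] ::('a::zero)^4)$1 = x"
 "(vector [x,y,z,w] ::('a::zero)^4)$2 = y"
 "(vector [x,y,z,w] ::('a::zero)^4)$3 = z"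
 "(vector [x,y,z,w] ::('a::zero)^4)$4 = w"
  unfolding vector_def by simp_all

lemma mmult2: "((A::'a::comm_ring_1^2^2) ** B)$i$j = A$i$1*B$1$j + A$i$2*B$2$j"
  by (simp add: matrix_matrix_mult_def sum_2)

lemma delta_eq: "delta M = M$1$1*M$2$2 - M$1$2*M$2$1" by (simp add: delta_def det_2)
lemma tt_eq: "tt M = (M$1$1^2 + M$2$1^2 + M$1$2^2 + M$2$2^2)/2"
  by (simp add: tt_def trace_def mmult2 transpose_def sum_2 power2_eq_square)
lemma aa_eq: "aa M = (M$1$1^2 + M$2$1^2 - M$1$2^2 - M$2$2^2)/2"
  by (simp add: aa_def tt_eq mmult2 transpose_def mat_def power2_eq_square field_simps)
lemma bb_eq: "bb M = M$1$1*M$1$2 + M$2$1*M$2$2"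
  by (simp add: bb_def mmult2 transpose_def mat_def)
lemma phi_comp: "phi M $ 1 = delta M" "phi M $ 2 = tt M" "phi M $ 3 = aa M" "phi M $ 4 = bb M"
  by (simp_all add: phi_def)

lemma SO2_D: assumes "g \<in> SO2"
  shows "g$2$2 = g$1$1" "g$2$1 = - g$1$2" "(g$1$1)^2 + (g$1$2)^2 = 1"
  using assms by (auto simp: SO2_def)

lemma part1: assumes "g \<in> SO2" shows "phi (g ** M) = phi M"
proof -
  note g = SO2_D[OF assms]
  define x where "x = g$1$1"
  define y where "y = g$1$2"
  have xy: "x^2 + y^2 = 1" using g by (simp add: x_def y_def)
  have "delta (g ** M) = (x^2+y^2) * delta M"
    by (simp add: delta_eq mmult2 g x_def[symmetric] y_def[symmetric]) algebra
  moreover have "tt (g ** M) = (x^2+y^2) * tt M"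
    by (simp add: tt_eq mmult2 g x_def[symmetric] y_def[symmetric]) algebra
  moreover have "aa (g ** M) = (x^2+y^2) * aa M"
    by (simp add: aa_eq mmult2 g x_def[symmetric] y_def[symmetric]) algebra
  moreover have "bb (g ** M) = (x^2+y^2) * bb M"
    by (simp add: bb_eq mmult2 g x_def[symmetric] y_def[symmetric]) algebra
  ultimately show ?thesis by (simp add: vec4_eq phi_comp xy)
qed

lemma part4: assumes "h \<in> SO2" shows "h ** h \<in> SO2"
proof -
  note g = SO2_D[OF assms]
  define x where "x = h$1$1"
  define y where "y = h$1$2"
  have xy: "x^2 + y^2 = 1" using g by (simp add: x_def y_def)
  have "(x*x - y*y)^2 + (2*x*y)^2 = (x^2+y^2)^2" by algebra
  then show ?thesis using xy
    by (simp add: SO2_def mmult2 g x_def[symmetric] y_def[symmetric]) algebra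
qed

lemma part5: assumes "k \<in> SO2" shows "\<exists>h\<in>SO2. h ** h = k"
proof -
  note g = SO2_D[OF assms]
  define u where "u = k$1$1"
  define v where "v = k$1$2"
  have uv: "u^2 + v^2 = 1" using g by (simp add: u_def v_def)
  define m where "m = u + \<i> * v"
  have m1: "m * (u - \<i> * v) = 1" using uv by (simp add: m_def algebra_simps power2_eq_square)
  then have mnz: "m \<noteq> 0" by auto
  define l where "l = csqrt m"
  have l2: "l^2 = m" by (simp add: l_def)
  with mnz have lnz: "l \<noteq> 0" by auto
  define x where "x = (l + 1/l)/2"
  define y where "y = (l - 1/l)/(2*\<i>)"
  define h :: "complex^2^2" where "h = (\<chi> i. \<chi> j. if i = j then x else if i = 1 then y else -y)"
  have h: "h$1$1 = x" "h$1$2 = y" "h$2$1 = -y" "h$2$2 = x" by (simp_all add: h_def)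
  have xy: "x^2+y^2 = 1" using lnz by (simp add: x_def y_def field_simps power2_eq_square)
  have inv: "1/m = u - \<i> * v" using m1 mnz by (simp add: field_simps)
  have "x*x - y*y = (m + 1/m)/2" using lnz l2[symmetric]
    by (simp add: x_def y_def field_simps power2_eq_square)
  moreover have "(m + 1/m)/2 = u" unfolding inv by (simp add: m_def algebra_simps)
  ultimately have e1: "x*x - y*y = u" by simp
  have "2*x*y = (m - 1/m)/(2*\<i>)" using lnz l2[symmetric]
    by (simp add: x_def y_def field_simps power2_eq_square)
  moreover have "(m - 1/m)/(2*\<i>) = v" unfolding inv by (simp add: m_def algebra_simps)
  ultimately have e2: "x*y+y*x = v" by (simp add: algebra_simps)
  have "h \<in> SO2" using xy by (simp add: SO2_def h)
  moreover have "h ** h = k"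
    using e1 e2 g by (simp add: mat2_eq mmult2 h u_def[symmetric] v_def[symmetric] algebra_simps)
  ultimately show ?thesis by blast
qed

lemma vec2_eq: "(x::'a^2) = y \<longleftrightarrow> x$1=y$1 \<and> x$2=y$2"
  by (auto simp: vec_eq_iff forall_2)

lemma mvmult2: "((A::'a::comm_ring_1^2^2) *v v)$i = A$i$1 * v$1 + A$i$2 * v$2"
  by (simp add: matrix_vector_mult_def sum_2)

lemma conj_det: fixes a b c d :: complex
  assumes M: "(a + \<i> * b) * (a - \<i> * b) = 1" and L: "(c + \<i> * d) * (c - \<i> * d) = 1"
    and A: "a + \<i> * b = c + \<i> * d"
  shows "a = c \<and> b = d"
proof -
  have "a - \<i> * b = (a - \<i> * b) * ((c + \<i> * d) * (c - \<i> * d))" using L by simp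
  also have "\<dots> = (a - \<i> * b) * ((a + \<i> * b) * (c - \<i> * d))" by (simp only: A)
  also have "\<dots> = ((a + \<i> * b) * (a - \<i> * b)) * (c - \<i> * d)" by (simp only: ac_simps)
  also have "\<dots> = c - \<i> * d" using M by simp
  finally have B: "a - \<i> * b = c - \<i> * d" .
  have "a = ((a + \<i> * b) + (a - \<i> * b))/2" by simp
  also have "\<dots> = ((c + \<i> * d) + (c - \<i> * d))/2" using A B by simp
  also have "\<dots> = c" by simp
  finally have 1: "a = c" .
  have "b = ((a + \<i> * b) - (a - \<i> * b))/(2*\<i>)" by (simp add: field_simps)
  also have "\<dots> = ((c + \<i> * d) - (c - \<i> * d))/(2*\<i>)" using A B by simp
  also have "\<dots> = d" by (simp add: field_simps)
  finally show ?thesis using 1 by simp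
qed

lemma part6: assumes "h \<in> SO2" "k \<in> SO2" shows "h ** h = k ** k \<longleftrightarrow> (k = h \<or> k = - h)"
proof
  assume "k = h \<or> k = - h" then show "h ** h = k ** k" by (auto simp: mat2_eq mmult2)
next
  assume hk: "h ** h = k ** k"
  note g = SO2_D[OF assms(1)]
  note g' = SO2_D[OF assms(2)]
  define x where "x = h$1$1"
  define y where "y = h$1$2"
  define p where "p = k$1$1"
  define q where "q = k$1$2"
  have xy: "x^2 + y^2 = 1" using g by (simp add: x_def y_def)
  have pq: "p^2 + q^2 = 1" using g' by (simp add: p_def q_def)
  have e1: "x*x - y*y = p*p - q*q" and e2: "x*y = p*q"
    using hk by (simp_all add: mat2_eq mmult2 g g' x_def[symmetric] y_def[symmetric]
        p_def[symmetric] q_def[symmetric] algebra_simps)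
  have L: "(x + \<i> * y) * (x - \<i> * y) = 1" using xy by (simp add: algebra_simps power2_eq_square)
  have M: "(p + \<i> * q) * (p - \<i> * q) = 1" using pq by (simp add: algebra_simps power2_eq_square)
  have "(p + \<i> * q - (x + \<i> * y)) * (p + \<i> * q + (x + \<i> * y))
      = (p*p - q*q - (x*x - y*y)) + 2*\<i>*(p*q - x*y)"
    by (simp add: algebra_simps)
  also have "\<dots> = 0" using e1 e2 by simp
  finally have "p + \<i> * q - (x + \<i> * y) = 0 \<or> p + \<i> * q + (x + \<i> * y) = 0"
    by (simp only: mult_eq_0_iff)
  then have "p + \<i> * q = x + \<i> * y \<or> p + \<i> * q = - (x + \<i> * y)"
    by (simp only: eq_iff_diff_eq_0[symmetric] eq_neg_iff_add_eq_0[symmetric])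
  then have "(p = x \<and> q = y) \<or> (p = -x \<and> q = -y)"
  proof
    assume A: "p + \<i> * q = x + \<i> * y"
    show ?thesis using conj_det[OF M L A] by simp
  next
    assume A: "p + \<i> * q = - (x + \<i> * y)"
    have L': "(-x + \<i> * (-y)) * (-x - \<i> * (-y)) = 1" using L by (simp add: algebra_simps)
    have A': "p + \<i> * q = -x + \<i> * (-y)" using A by simp
    show ?thesis using conj_det[OF M L' A'] by simp
  qed
  then show "k = h \<or> k = - h"
    using g g' by (auto simp: mat2_eq x_def y_def p_def q_def)
qed

lemma SO2_inv: assumes "h \<in> SO2" shows "matrix_inv h = transpose h"
proof -
  note g = SO2_D[OF assms]
  have r: "h ** transpose h = mat 1" and l: "transpose h ** h = mat 1"
    using g by (simp_all add: mat2_eq mmult2 transpose_def mat_def power2_eq_square algebra_simps)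
  show ?thesis unfolding matrix_inv_def
  proof (rule some_equality)
    show "h ** transpose h = mat 1 \<and> transpose h ** h = mat 1" using r l by simp
  next
    fix A assume "h ** A = mat 1 \<and> A ** h = mat 1"
    then have A: "A ** h = mat 1" by simp
    have "A = A ** (h ** transpose h)" using r by (simp add: matrix_mul_rid)
    also have "\<dots> = (A ** h) ** transpose h" by (simp add: matrix_mul_assoc)
    finally show "A = transpose h" using A by (simp add: matrix_mul_lid)
  qed
qed

lemma part7: assumes "h \<in> SO2"
  shows "delta (M ** matrix_inv h) = delta M \<and> tt (M ** matrix_inv h) = tt M \<and>
        vector [aa (M ** matrix_inv h), bb (M ** matrix_inv h)]
          = (h ** h) *v (vector [aa M, bb M] :: complex^2)"
proof -
  note g = SO2_D[OF assms]
  define x where "x = h$1$1"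
  define y where "y = h$1$2"
  have xy: "x^2 + y^2 = 1" using g by (simp add: x_def y_def)
  have d: "delta (M ** matrix_inv h) = (x^2+y^2) * delta M"
    by (simp add: SO2_inv[OF assms] transpose_def delta_eq mmult2 g x_def[symmetric] y_def[symmetric]) algebra
  have t: "tt (M ** matrix_inv h) = (x^2+y^2) * tt M"
    by (simp add: SO2_inv[OF assms] transpose_def tt_eq mmult2 g x_def[symmetric] y_def[symmetric]) algebra
  have a: "aa (M ** matrix_inv h) = (x*x - y*y) * aa M + (x*y+y*x) * bb M"
    by (simp add: SO2_inv[OF assms] transpose_def aa_eq bb_eq mmult2 g x_def[symmetric] y_def[symmetric]) algebra
  have b: "bb (M ** matrix_inv h) = (-y*x - x*y) * aa M + (x*x - y*y) * bb M"
    by (simp add: SO2_inv[OF assms] transpose_def aa_eq bb_eq mmult2 g x_def[symmetric] y_def[symmetric]) algebra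
  show ?thesis using xy d t a b
    by (simp add: vec2_eq mvmult2 mmult2 g x_def[symmetric] y_def[symmetric] algebra_simps)
qed



lemma pf_mono: "poly_fun C p \<Longrightarrow> C \<subseteq> D \<Longrightarrow> poly_fun D p"
  by (induction rule: poly_fun.induct) (auto intro: poly_fun.intros)

lemma pf_comp: "poly_fun C p \<Longrightarrow> (\<And>c. c \<in> C \<Longrightarrow> poly_fun D (\<lambda>v. c (h v))) \<Longrightarrow> poly_fun D (\<lambda>v. p (h v))"
  by (induction rule: poly_fun.induct) (auto intro: poly_fun.intros)

lemma pf_cont: "poly_fun C p \<Longrightarrow> (\<And>c. c \<in> C \<Longrightarrow> continuous_on UNIV c) \<Longrightarrow> continuous_on UNIV p"
  by (induction rule: poly_fun.induct) (auto intro: continuous_intros)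

lemma pf_minus: "poly_fun C p \<Longrightarrow> poly_fun C (\<lambda>v. - p v)"
  using poly_fun.mult[OF poly_fun.const[of C "-1"]] by simp

lemma pf_sub: "poly_fun C p \<Longrightarrow> poly_fun C q \<Longrightarrow> poly_fun C (\<lambda>v. p v - q v)"
  using poly_fun.add[OF _ pf_minus] by (simp add: )

lemma pf_pow: "poly_fun C p \<Longrightarrow> poly_fun C (\<lambda>v. p v ^ n)"
  by (induction n) (auto intro: poly_fun.intros)

lemmas pf_intros = poly_fun.const poly_fun.add poly_fun.mult pf_sub pf_pow pf_minus

definition C4 :: "(complex^4 \<Rightarrow> complex) set" where "C4 = {(\<lambda>x. x $ i) | i. True}"
definition C3 :: "(complex^4 \<Rightarrow> complex) set" where "C3 = {(\<lambda>x. x $ i) | i. i \<noteq> 1}"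
definition CM :: "(complex^2^2 \<Rightarrow> complex) set" where "CM = {(\<lambda>M. M $ i $ j) | i j. True}"

lemma poly_C4_eq: "poly_C4 = poly_fun C4" by (simp add: poly_C4_def C4_def)
lemma poly_M2_eq: "poly_M2 = poly_fun CM" by (simp add: poly_M2_def CM_def)

lemma C4_coord: "poly_fun C4 (\<lambda>x. x $ i)" by (rule poly_fun.coord) (auto simp: C4_def)
lemma C3_coord: "i \<noteq> 1 \<Longrightarrow> poly_fun C3 (\<lambda>x. x $ i)" by (rule poly_fun.coord) (auto simp: C3_def)
lemma CM_coord: "poly_fun CM (\<lambda>M. M $ i $ j)" by (rule poly_fun.coord) (auto simp: CM_def)
lemma C3_C4: "poly_fun C3 p \<Longrightarrow> poly_fun C4 p" by (erule pf_mono) (auto simp: C3_def C4_def)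

lemma C4_cont: "poly_fun C4 p \<Longrightarrow> continuous_on UNIV p"
  by (erule pf_cont) (auto simp: C4_def intro!: continuous_intros)
lemma CM_cont: "poly_fun CM p \<Longrightarrow> continuous_on UNIV p"
  by (erule pf_cont) (auto simp: CM_def intro!: continuous_intros)

lemma phi_poly: "poly_fun C4 q \<Longrightarrow> poly_fun CM (\<lambda>M. q (phi M))"
proof (erule pf_comp)
  fix c assume "c \<in> C4"
  then obtain i where c: "c = (\<lambda>x. x $ i)" by (auto simp: C4_def)
  have e: "(\<lambda>M. phi M $ 1) = (\<lambda>M. M$1$1*M$2$2 - M$1$2*M$2$1)"
    "(\<lambda>M. phi M $ 2) = (\<lambda>M. (1/2) * (M$1$1^2 + M$2$1^2 + M$1$2^2 + M$2$2^2))"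
    "(\<lambda>M. phi M $ 3) = (\<lambda>M. (1/2) * (M$1$1^2 + M$2$1^2 - M$1$2^2 - M$2$2^2))"
    "(\<lambda>M. phi M $ 4) = (\<lambda>M. M$1$1*M$1$2 + M$2$1*M$2$2)"
    by (simp_all add: phi_comp delta_eq tt_eq aa_eq bb_eq)
  have "poly_fun CM (\<lambda>M. phi M $ 1)" "poly_fun CM (\<lambda>M. phi M $ 2)"
    "poly_fun CM (\<lambda>M. phi M $ 3)" "poly_fun CM (\<lambda>M. phi M $ 4)"
    unfolding e by (intro pf_intros CM_coord)+
  moreover have "i = 1 \<or> i = 2 \<or> i = 3 \<or> i = 4" by (rule exhaust_4)
  ultimately show "poly_fun CM (\<lambda>v. c (phi v))" unfolding c by auto
qed

section \<open>density\<close>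

lemma dense_eq:
  fixes f g H :: "'a::metric_space \<Rightarrow> complex"
  assumes "continuous_on UNIV f" "continuous_on UNIV g" "\<And>x. H x \<noteq> 0 \<Longrightarrow> f x = g x"
    "\<And>x e. e > 0 \<Longrightarrow> \<exists>y. dist y x < e \<and> H y \<noteq> 0"
  shows "f x = g x"
proof -
  have "x \<in> closure {y. H y \<noteq> 0}" using assms(4) by (auto simp: closure_approachable)
  also have "\<dots> \<subseteq> {y. f y = g y}"
    by (rule closure_minimal) (use assms in \<open>auto intro: closed_Collect_eq\<close>)
  finally show ?thesis by simp
qed

lemma poly_avoid: fixes p :: "complex poly" assumes "p \<noteq> 0" "e > 0"
  shows "\<exists>\<epsilon>. norm \<epsilon> < e \<and> poly p \<epsilon> \<noteq> 0"
proof -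
  obtain e1 where e1: "e1 > 0" "\<forall>w\<in>ball 0 e1. w \<in> UNIV \<and> (w \<noteq> 0 \<longrightarrow> w \<notin> {x. poly p x = 0})"
    using finite_ball_avoid[OF open_UNIV poly_roots_finite[OF assms(1)], of 0] by auto
  define w where "w = complex_of_real (min e e1 / 2)"
  have "norm w < e" "norm w < e1" "w \<noteq> 0" using \<open>e > 0\<close> \<open>e1 > 0\<close> by (auto simp: w_def)
  then show ?thesis using e1 by (auto simp: dist_norm)
qed

lemma norm_axis_le: "norm (axis i (v::'a::real_normed_vector)) \<le> norm v"
proof -
  have "norm (axis i v) \<le> (\<Sum>j\<in>UNIV. norm (axis i v $ j))" by (simp add: norm_vec_def L2_set_le_sum)
  also have "\<dots> = norm v" by (simp add: axis_def if_distrib cong: if_cong)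
  finally show ?thesis .
qed

definition H4 :: "complex^4 \<Rightarrow> complex" where
  "H4 y = (y$2 + y$3) * (y$2^2 - y$3^2 - y$4^2)"

lemma H4_approx: "e > 0 \<Longrightarrow> \<exists>y. dist y x < e \<and> H4 y \<noteq> 0"
proof -
  assume "e > 0"
  define p where "p = [:x$2+x$3, 1:] * [:x$2^2-x$3^2-x$4^2, 2*x$2, 1:]"
  have "p \<noteq> 0" by (simp add: p_def)
  then obtain \<epsilon> where \<epsilon>: "norm \<epsilon> < e" "poly p \<epsilon> \<noteq> 0" using poly_avoid \<open>e > 0\<close> by blast
  define y where "y = x + axis 2 \<epsilon>"
  have "H4 y = poly p \<epsilon>"
    by (simp add: H4_def y_def p_def axis_def power2_eq_square algebra_simps)
  moreover have "dist y x = norm (axis (2::4) \<epsilon>)" by (simp add: y_def dist_norm)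
  then have "dist y x < e" using norm_axis_le[of "2::4" \<epsilon>] \<epsilon>(1) by linarith
  ultimately show ?thesis using \<epsilon> by auto
qed

definition HM :: "complex^2^2 \<Rightarrow> complex" where
  "HM M = M$1$1^2 + M$2$1^2"

lemma HM_approx: "e > 0 \<Longrightarrow> \<exists>y. dist y x < e \<and> HM y \<noteq> 0"
proof -
  assume "e > 0"
  define p where "p = [:x$1$1^2 + x$2$1^2, 2*x$1$1, 1:]"
  have "p \<noteq> 0" by (simp add: p_def)
  then obtain \<epsilon> where \<epsilon>: "norm \<epsilon> < e" "poly p \<epsilon> \<noteq> 0" using poly_avoid \<open>e > 0\<close> by blast
  define y where "y = x + axis 1 (axis 1 \<epsilon>)"
  have "HM y = poly p \<epsilon>"
    by (simp add: HM_def y_def p_def axis_def power2_eq_square algebra_simps)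
  moreover have "dist y x = norm (axis (1::2) (axis (1::2) \<epsilon>))" by (simp add: y_def dist_norm)
  then have "dist y x < e" using norm_axis_le[of "1::2" "axis (1::2) \<epsilon>"] norm_axis_le[of "1::2" \<epsilon>] \<epsilon>(1)
    by linarith
  ultimately show ?thesis using \<epsilon> by auto
qed

section \<open>slice\<close>

definition mk2 :: "'a \<Rightarrow> 'a \<Rightarrow> 'a \<Rightarrow> 'a \<Rightarrow> 'a^2^2" where
  "mk2 a b c d = (\<chi> i. \<chi> j. if i = 1 then (if j = 1 then a else b) else (if j = 1 then c else d))"

lemma mk2_simps [simp]: "mk2 a b c d $1$1 = a" "mk2 a b c d $1$2 = b" "mk2 a b c d $2$1 = c" "mk2 a b c d $2$2 = d"
  by (simp_all add: mk2_def)

lemma ii_ii [simp]: "\<i> * (\<i> * a) = - a" by (simp add: mult.assoc[symmetric])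

definition slice :: "complex \<Rightarrow> complex^4 \<Rightarrow> complex^2^2" where
  "slice c y = (let w1 = (y$2 + y$3) / c; z2 = c * (y$4 + \<i> * y$1) / (y$2 + y$3);
     w2 = (y$4 - \<i> * y$1) / c
   in mk2 ((c + w1)/2) ((z2 + w2)/2) ((c - w1)/(2*\<i>)) ((z2 - w2)/(2*\<i>)))"

lemma zw_eq: fixes a1 a2 b1 b2 :: complex
  assumes "a1 + \<i> * a2 = b1 + \<i> * b2" "a1 - \<i> * a2 = b1 - \<i> * b2"
  shows "a1 = b1 \<and> a2 = b2"
proof -
  have "a1 = ((a1 + \<i> * a2) + (a1 - \<i> * a2))/2" by simp
  also have "\<dots> = ((b1 + \<i> * b2) + (b1 - \<i> * b2))/2" using assms by simp
  also have "\<dots> = b1" by simp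
  finally have 1: "a1 = b1" .
  have "a2 = ((a1 + \<i> * a2) - (a1 - \<i> * a2))/(2*\<i>)" by (simp add: field_simps)
  also have "\<dots> = ((b1 + \<i> * b2) - (b1 - \<i> * b2))/(2*\<i>)" using assms by simp
  also have "\<dots> = b2" by (simp add: field_simps)
  finally show ?thesis using 1 by simp
qed

lemma zw_of: fixes z w :: complex
  shows "(z + w)/2 + \<i> * ((z - w)/(2*\<i>)) = z" "(z + w)/2 - \<i> * ((z - w)/(2*\<i>)) = w"
  by (simp_all add: field_simps)

lemma zw_eq2: fixes a1 a2 z w :: complex
  assumes "a1 + \<i> * a2 = z" "a1 - \<i> * a2 = w"
  shows "a1 = (z + w)/2 \<and> a2 = (z - w)/(2*\<i>)"
  using zw_eq[of a1 a2 "(z + w)/2" "(z - w)/(2*\<i>)"] assms zw_of[of z w] by simp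

lemma phi_slice: assumes "c \<noteq> 0" "y$2 + y$3 \<noteq> 0" "ff y = 0"
  shows "phi (slice c y) = y"
proof -
  define d where "d = y$1"
  define t where "t = y$2"
  define a where "a = y$3"
  define b where "b = y$4"
  have ta: "t + a \<noteq> 0" using assms by (simp add: t_def a_def)
  have f0: "d^2 - (t^2 - a^2 - b^2) = 0" using assms(3) by (simp add: ff_def d_def t_def a_def b_def algebra_simps)
  then have f: "d^2 = t^2 - a^2 - b^2" by simp
  define w1 where "w1 = (t + a) / c"
  define z2 where "z2 = c * (b + \<i> * d) / (t + a)"
  define w2 where "w2 = (b - \<i> * d) / c"
  have S: "slice c y = mk2 ((c + w1)/2) ((z2 + w2)/2) ((c - w1)/(2*\<i>)) ((z2 - w2)/(2*\<i>))"
    by (simp add: slice_def Let_def d_def t_def a_def b_def w1_def z2_def w2_def)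
  have cw: "c * w1 = t + a" using assms(1) by (simp add: w1_def)
  have "(b + \<i> * d) * (b - \<i> * d) = b^2 + d^2" by (simp add: algebra_simps power2_eq_square)
  also have "\<dots> = (t - a) * (t + a)" using f by (simp add: algebra_simps power2_eq_square)
  finally have bd: "(b + \<i> * d) * (b - \<i> * d) = (t - a) * (t + a)" .
  have "z2 * w2 = ((b + \<i> * d) * (b - \<i> * d)) / (t + a)" using assms(1)
    by (simp add: z2_def w2_def)
  then have zw: "z2 * w2 = t - a" using bd ta by simp
  have e1: "delta (slice c y) = (z2 * w1 - c * w2) / (2*\<i>)"
    by (simp add: S delta_eq field_simps, (simp add: algebra_simps)?)
  have e2: "tt (slice c y) = (c*w1 + z2*w2)/2"
    by (simp add: S tt_eq field_simps power2_eq_square, (simp add: algebra_simps)?)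
  have e3: "aa (slice c y) = (c*w1 - z2*w2)/2"
    by (simp add: S aa_eq field_simps power2_eq_square, (simp add: algebra_simps)?)
  have e4: "bb (slice c y) = (c*w2 + z2*w1)/2"
    by (simp add: S bb_eq field_simps power2_eq_square, (simp add: algebra_simps)?)
  have h1: "z2 * w1 = b + \<i> * d" and h2: "c * w2 = b - \<i> * d" using ta assms(1) by (simp_all add: z2_def w1_def w2_def)
  have "delta (slice c y) = ((b + \<i> * d) - (b - \<i> * d))/(2*\<i>)" using e1 h1 h2 by simp
  also have "\<dots> = d" by (simp add: field_simps)
  finally have r1: "delta (slice c y) = d" .
  have "tt (slice c y) = ((t + a) + (t - a))/2" using e2 cw zw by simp
  also have "\<dots> = t" by (simp add: field_simps)
  finally have r2: "tt (slice c y) = t" .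
  have "aa (slice c y) = ((t + a) - (t - a))/2" using e3 cw zw by simp
  also have "\<dots> = a" by (simp add: field_simps)
  finally have r3: "aa (slice c y) = a" .
  have "bb (slice c y) = ((b - \<i> * d) + (b + \<i> * d))/2" using e4 h1 h2 by simp
  also have "\<dots> = b" by (simp add: field_simps)
  finally have r4: "bb (slice c y) = b" .
  show ?thesis using r1 r2 r3 r4
    by (simp add: vec4_eq phi_comp d_def t_def a_def b_def)
qed

lemma gz: fixes x y a b :: complex
  shows "(x*a + y*b) + \<i> * (-y*a + x*b) = (x - \<i>*y) * (a + \<i>*b)"
    "(x*a + y*b) - \<i> * (-y*a + x*b) = (x + \<i>*y) * (a - \<i>*b)"
  by (simp_all add: algebra_simps)

lemma slice_orbit: assumes "c \<noteq> 0" "HM M \<noteq> 0" shows "\<exists>g\<in>SO2. g ** M = slice c (phi M) \<and> (c = M$1$1 + \<i> * M$2$1 \<longrightarrow> g = mat 1)"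
proof -
  define z1 where "z1 = M$1$1 + \<i> * M$2$1"
  define w1 where "w1 = M$1$1 - \<i> * M$2$1"
  define z2 where "z2 = M$1$2 + \<i> * M$2$2"
  define w2 where "w2 = M$1$2 - \<i> * M$2$2"
  have zw1: "z1 * w1 = HM M" by (simp add: z1_def w1_def HM_def algebra_simps power2_eq_square)
  then have z1: "z1 \<noteq> 0" and w1: "w1 \<noteq> 0" using assms(2) by auto
  define l where "l = z1 / c"
  have l: "l \<noteq> 0" using z1 assms(1) by (simp add: l_def)
  define x where "x = (l + 1/l)/2"
  define y where "y = (l - 1/l)/(2*\<i>)"
  have xpy: "x + \<i>*y = l" by (simp add: x_def y_def field_simps)
  have xmy: "x - \<i>*y = 1/l" by (simp add: x_def y_def field_simps)
  define g where "g = mk2 x y (-y) x"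
  have "x^2 + y^2 = (x + \<i>*y) * (x - \<i>*y)" by (simp add: algebra_simps power2_eq_square)
  also have "\<dots> = 1" using l by (simp add: xpy xmy)
  finally have "g \<in> SO2" by (simp add: SO2_def g_def)
  have F1: "phi M $ 2 + phi M $ 3 = z1 * w1"
    unfolding zw1 by (simp add: phi_comp tt_eq aa_eq HM_def add_divide_distrib[symmetric])
  have F2: "phi M $ 4 + \<i> * phi M $ 1 = z2 * w1"
    by (simp add: phi_comp bb_eq delta_eq z2_def w1_def algebra_simps)
  have F3: "phi M $ 4 - \<i> * phi M $ 1 = z1 * w2"
    by (simp add: phi_comp bb_eq delta_eq z1_def w2_def algebra_simps)
  define W1 where "W1 = z1 * w1 / c"
  define Z2 where "Z2 = c * z2 / z1"
  define W2 where "W2 = z1 * w2 / c"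
  have "c * (z2 * w1) / (z1 * w1) = Z2" using w1 by (simp add: Z2_def)
  then have S: "slice c (phi M) = mk2 ((c + W1)/2) ((Z2 + W2)/2) ((c - W1)/(2*\<i>)) ((Z2 - W2)/(2*\<i>))"
    unfolding slice_def Let_def F1 F2 F3 W1_def W2_def by simp
  have gm: "(g ** M)$1$1 = x * M$1$1 + y * M$2$1" "(g ** M)$2$1 = -y * M$1$1 + x * M$2$1"
    "(g ** M)$1$2 = x * M$1$2 + y * M$2$2" "(g ** M)$2$2 = -y * M$1$2 + x * M$2$2"
    by (simp_all add: g_def mmult2)
  have c1: "(g ** M)$1$1 + \<i> * (g ** M)$2$1 = c"
    unfolding gm gz xmy using assms(1) z1 by (simp add: z1_def[symmetric] l_def)
  have c2: "(g ** M)$1$1 - \<i> * (g ** M)$2$1 = W1"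
    unfolding gm gz xpy using assms(1) by (simp add: w1_def[symmetric] l_def W1_def)
  have c3: "(g ** M)$1$2 + \<i> * (g ** M)$2$2 = Z2"
    unfolding gm gz xmy using assms(1) z1 by (simp add: z2_def[symmetric] l_def Z2_def)
  have c4: "(g ** M)$1$2 - \<i> * (g ** M)$2$2 = W2"
    unfolding gm gz xpy using assms(1) by (simp add: w2_def[symmetric] l_def W2_def)
  have "g ** M = slice c (phi M)"
    unfolding S mat2_eq using zw_eq2[OF c1 c2] zw_eq2[OF c3 c4] by simp
  moreover have "c = z1 \<longrightarrow> g = mat 1"
  proof
    assume "c = z1"
    then have "l = 1" using z1 by (simp add: l_def)
    then show "g = mat 1" by (simp add: g_def x_def y_def mat2_eq mat_def)
  qed
  ultimately show ?thesis using \<open>g \<in> SO2\<close> unfolding z1_def by blast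
qed

lemma ent: fixes c T B D :: complex assumes "c \<noteq> 0" "T \<noteq> 0" shows
 "(c + T/c)/2 * T = (1/2)*(c*T + (1/c)*T^2)"
 "(c - T/c)/(2*\<i>) * T = (1/(2*\<i>))*(c*T - (1/c)*T^2)"
 "(c*B/T + D/c)/2 * T = (1/2)*(c*B + (1/c)*(D*T))"
 "(c*B/T - D/c)/(2*\<i>) * T = (1/(2*\<i>))*(c*B - (1/c)*(D*T))"
  using assms by (simp_all add: field_simps power2_eq_square)

lemma slice_poly: assumes cnz: "c \<noteq> 0" and "poly_fun CM P" shows
  "\<exists>N p. poly_fun C4 p \<and> (\<forall>y. y$2 + y$3 \<noteq> 0 \<longrightarrow> p y = P (slice c y) * (y$2 + y$3)^N)"
  using assms(2)
proof (induction rule: poly_fun.induct)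
  case (const k)
  show ?case by (rule exI[of _ 0], rule exI[of _ "\<lambda>_. k"]) (auto intro: poly_fun.const)
next
  case (coord x)
  then obtain i j where x: "x = (\<lambda>M. M $ i $ j)" by (auto simp: CM_def)
  define e11 where "e11 = (\<lambda>y::complex^4. (1/2) * (c * (y$2+y$3) + (1/c) * (y$2+y$3)^2))"
  define e21 where "e21 = (\<lambda>y::complex^4. (1/(2*\<i>)) * (c * (y$2+y$3) - (1/c) * (y$2+y$3)^2))"
  define e12 where "e12 = (\<lambda>y::complex^4. (1/2) * (c * (y$4 + \<i> * y$1) + (1/c) * ((y$4 - \<i> * y$1) * (y$2+y$3))))"
  define e22 where "e22 = (\<lambda>y::complex^4. (1/(2*\<i>)) * (c * (y$4 + \<i> * y$1) - (1/c) * ((y$4 - \<i> * y$1) * (y$2+y$3))))"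
  have p: "poly_fun C4 e11" "poly_fun C4 e21" "poly_fun C4 e12" "poly_fun C4 e22"
    unfolding e11_def e21_def e12_def e22_def by (intro pf_intros C4_coord)+
  have v: "e11 y = slice c y $1$1 * (y$2+y$3)" "e21 y = slice c y $2$1 * (y$2+y$3)"
     "e12 y = slice c y $1$2 * (y$2+y$3)" "e22 y = slice c y $2$2 * (y$2+y$3)"
    if "y$2 + y$3 \<noteq> 0" for y
    unfolding e11_def e21_def e12_def e22_def slice_def Let_def mk2_simps
    by (simp_all only: ent[OF cnz that])
  have "\<forall>i j. \<exists>p. poly_fun C4 p \<and> (\<forall>y. y$2 + y$3 \<noteq> 0 \<longrightarrow> p y = slice c y $ i $ j * (y$2 + y$3))"
    unfolding forall_2 using p v by blast
  then obtain p where "poly_fun C4 p" "\<forall>y. y$2 + y$3 \<noteq> 0 \<longrightarrow> p y = slice c y $ i $ j * (y$2 + y$3)" by blast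
  then show ?case unfolding x by (intro exI[of _ 1] exI[of _ p]) simp
next
  case (add P1 P2)
  then obtain N1 p1 N2 p2 where h: "poly_fun C4 p1" "\<forall>y. y$2 + y$3 \<noteq> 0 \<longrightarrow> p1 y = P1 (slice c y) * (y$2 + y$3)^N1"
    "poly_fun C4 p2" "\<forall>y. y$2 + y$3 \<noteq> 0 \<longrightarrow> p2 y = P2 (slice c y) * (y$2 + y$3)^N2" by blast
  show ?case
    apply (rule exI[of _ "N1 + N2"], rule exI[of _ "\<lambda>y. p1 y * (y$2+y$3)^N2 + p2 y * (y$2+y$3)^N1"])
    using h by (auto intro!: pf_intros C4_coord simp: power_add algebra_simps)
next
  case (mult P1 P2)
  then obtain N1 p1 N2 p2 where h: "poly_fun C4 p1" "\<forall>y. y$2 + y$3 \<noteq> 0 \<longrightarrow> p1 y = P1 (slice c y) * (y$2 + y$3)^N1"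
    "poly_fun C4 p2" "\<forall>y. y$2 + y$3 \<noteq> 0 \<longrightarrow> p2 y = P2 (slice c y) * (y$2 + y$3)^N2" by blast
  show ?case
    apply (rule exI[of _ "N1 + N2"], rule exI[of _ "\<lambda>y. p1 y * p2 y"])
    using h by (auto intro!: pf_intros simp: power_add algebra_simps)
qed

lemma T_phi: "phi M $ 2 + phi M $ 3 = HM M"
  by (simp add: phi_comp tt_eq aa_eq HM_def add_divide_distrib[symmetric])

lemma part3: assumes "poly_M2 P" "poly_M2 Q" "\<exists>M. Q M \<noteq> 0"
  "\<forall>g\<in>SO2. \<forall>M. P (g ** M) * Q M = P M * Q (g ** M)"
 shows "\<exists>p q. poly_C4 p \<and> poly_C4 q \<and> (\<exists>M. q (phi M) \<noteq> 0) \<and> (\<forall>M. P M * q (phi M) = Q M * p (phi M))"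
proof -
  have P: "poly_fun CM P" and Q: "poly_fun CM Q" using assms by (simp_all add: poly_M2_eq)
  have "\<exists>M0. Q M0 \<noteq> 0 \<and> HM M0 \<noteq> 0"
  proof (rule ccontr)
    assume A: "\<not> (\<exists>M0. Q M0 \<noteq> 0 \<and> HM M0 \<noteq> 0)"
    have "Q M = (\<lambda>_. 0) M" for M
    proof (rule dense_eq[where H=HM])
      show "continuous_on UNIV Q" by (rule CM_cont[OF Q])
      show "continuous_on UNIV (\<lambda>_. 0::complex)" by simp
      show "HM x \<noteq> 0 \<Longrightarrow> Q x = 0" for x using A by blast
      show "e > 0 \<Longrightarrow> \<exists>y. dist y x < e \<and> HM y \<noteq> 0" for x e by (rule HM_approx)
    qed
    with assms(3) show False by simp
  qed
  then obtain M0 where M0: "Q M0 \<noteq> 0" "HM M0 \<noteq> 0" by blast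
  define c where "c = M0$1$1 + \<i> * M0$2$1"
  have "c * (M0$1$1 - \<i> * M0$2$1) = HM M0" by (simp add: c_def HM_def algebra_simps power2_eq_square)
  then have cnz: "c \<noteq> 0" using M0 by auto
  obtain N1 p1 where p1: "poly_fun C4 p1" "\<forall>y. y$2 + y$3 \<noteq> 0 \<longrightarrow> p1 y = P (slice c y) * (y$2 + y$3)^N1"
    using slice_poly[OF cnz P] by blast
  obtain N2 q1 where q1: "poly_fun C4 q1" "\<forall>y. y$2 + y$3 \<noteq> 0 \<longrightarrow> q1 y = Q (slice c y) * (y$2 + y$3)^N2"
    using slice_poly[OF cnz Q] by blast
  define p where "p = (\<lambda>y::complex^4. p1 y * (y$2+y$3)^N2)"
  define q where "q = (\<lambda>y::complex^4. q1 y * (y$2+y$3)^N1)"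
  have pp: "poly_fun C4 p" "poly_fun C4 q" unfolding p_def q_def using p1(1) q1(1)
    by (auto intro!: pf_intros C4_coord)
  have qv: "q (phi M) = Q (slice c (phi M)) * HM M ^ (N1 + N2)" if "HM M \<noteq> 0" for M
    using q1(2) that by (simp add: q_def T_phi power_add)
  have pv: "p (phi M) = P (slice c (phi M)) * HM M ^ (N1 + N2)" if "HM M \<noteq> 0" for M
    using p1(2) that by (simp add: p_def T_phi power_add)
  have key: "P M * q (phi M) = Q M * p (phi M)" if hm: "HM M \<noteq> 0" for M
  proof -
    obtain g where g: "g \<in> SO2" "g ** M = slice c (phi M)" using slice_orbit[OF cnz hm] by blast
    have inv: "P (g ** M) * Q M = P M * Q (g ** M)" using assms(4) g(1) by blast
    show ?thesis unfolding qv[OF hm] pv[OF hm] g(2)[symmetric]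
      by (metis inv mult.assoc mult.commute)
  qed
  have all: "P M * q (phi M) = Q M * p (phi M)" for M
  proof (rule dense_eq[where H=HM])
    show "continuous_on UNIV (\<lambda>M. P M * q (phi M))"
      by (rule CM_cont, rule poly_fun.mult[OF P phi_poly[OF pp(2)]])
    show "continuous_on UNIV (\<lambda>M. Q M * p (phi M))"
      by (rule CM_cont, rule poly_fun.mult[OF Q phi_poly[OF pp(1)]])
    show "HM x \<noteq> 0 \<Longrightarrow> P x * q (phi x) = Q x * p (phi x)" for x by (rule key)
    show "e > 0 \<Longrightarrow> \<exists>y. dist y x < e \<and> HM y \<noteq> 0" for x e by (rule HM_approx)
  qed
  obtain g where "g ** M0 = slice c (phi M0)" "g = mat 1"
    using slice_orbit[OF cnz M0(2)] by (auto simp: c_def)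
  then have "slice c (phi M0) = M0" by (simp add: matrix_mul_lid)
  then have "q (phi M0) \<noteq> 0" using qv[OF M0(2)] M0 by simp
  then show ?thesis using pp all by (auto simp: poly_C4_eq)
qed

definition E4 :: "complex^4 \<Rightarrow> complex" where "E4 y = y$2^2 - y$3^2 - y$4^2"
definition upd :: "complex^4 \<Rightarrow> complex \<Rightarrow> complex^4" where
  "upd y v = (\<chi> i. if i = 1 then v else y $ i)"

lemma upd_simps [simp]: "upd y v $ 1 = v" "upd y v $ 2 = y $ 2" "upd y v $ 3 = y $ 3" "upd y v $ 4 = y $ 4"
  by (simp_all add: upd_def)

lemma C3_indep: "poly_fun C3 r \<Longrightarrow> r (upd y v) = r y"
  by (induction rule: poly_fun.induct) (auto simp: C3_def upd_def)

lemma E4_C3: "poly_fun C3 E4"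
  unfolding E4_def[abs_def] by (intro pf_intros C3_coord) simp_all

lemma ff_E4: "ff x = x$1^2 - E4 x" by (simp add: ff_def E4_def)

lemma division: "poly_fun C4 p \<Longrightarrow> \<exists>q r0 r1. poly_fun C4 q \<and> poly_fun C3 r0 \<and> poly_fun C3 r1 \<and>
   (\<forall>x. p x = ff x * q x + r0 x + x$1 * r1 x)"
proof (induction rule: poly_fun.induct)
  case (const k)
  show ?case by (rule exI[of _ "\<lambda>_. 0"], rule exI[of _ "\<lambda>_. k"], rule exI[of _ "\<lambda>_. 0"])
    (auto intro: poly_fun.const)
next
  case (coord c)
  then obtain i where c: "c = (\<lambda>x. x $ i)" by (auto simp: C4_def)
  show ?case
  proof (cases "i = 1")
    case True
    show ?thesis by (rule exI[of _ "\<lambda>_. 0"], rule exI[of _ "\<lambda>_. 0"], rule exI[of _ "\<lambda>_. 1"])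
      (auto intro: poly_fun.const simp: c True)
  next
    case False
    show ?thesis by (rule exI[of _ "\<lambda>_. 0"], rule exI[of _ c], rule exI[of _ "\<lambda>_. 0"])
      (auto intro: poly_fun.const C3_coord simp: c False)
  qed
next
  case (add p p')
  then obtain q r0 r1 q' r0' r1' where h: "poly_fun C4 q" "poly_fun C3 r0" "poly_fun C3 r1"
    "\<forall>x. p x = ff x * q x + r0 x + x$1 * r1 x"
    "poly_fun C4 q'" "poly_fun C3 r0'" "poly_fun C3 r1'"
    "\<forall>x. p' x = ff x * q' x + r0' x + x$1 * r1' x" by metis
  show ?case
    apply (rule exI[of _ "\<lambda>x. q x + q' x"], rule exI[of _ "\<lambda>x. r0 x + r0' x"], rule exI[of _ "\<lambda>x. r1 x + r1' x"])
    using h by (auto intro!: pf_intros simp: algebra_simps)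
next
  case (mult p p')
  then obtain q r0 r1 q' r0' r1' where h: "poly_fun C4 q" "poly_fun C3 r0" "poly_fun C3 r1"
    "\<forall>x. p x = ff x * q x + r0 x + x$1 * r1 x"
    "poly_fun C4 q'" "poly_fun C3 r0'" "poly_fun C3 r1'"
    "\<forall>x. p' x = ff x * q' x + r0' x + x$1 * r1' x" by metis
  have eq: "p x * p' x = ff x * (q x * p' x + (r0 x + x$1 * r1 x) * q' x + r1 x * r1' x)
     + (r0 x * r0' x + E4 x * (r1 x * r1' x)) + x$1 * (r0 x * r1' x + r1 x * r0' x)" for x
  proof -
    have "p x * p' x = (ff x * q x + (r0 x + x$1 * r1 x)) * p' x" using h(4) by simp
    also have "\<dots> = ff x * (q x * p' x) + (r0 x + x$1 * r1 x) * (ff x * q' x + r0' x + x$1 * r1' x)"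
      using h(8) by (simp add: algebra_simps)
    also have "\<dots> = ff x * (q x * p' x + (r0 x + x$1 * r1 x) * q' x + r1 x * r1' x)
     + (r0 x * r0' x + E4 x * (r1 x * r1' x)) + x$1 * (r0 x * r1' x + r1 x * r0' x)"
      unfolding ff_E4 by (simp add: algebra_simps power2_eq_square)
    finally show ?thesis .
  qed
  note A = poly_fun.add[OF poly_fun.add[OF poly_fun.mult[OF h(1) mult.hyps(2)]
      poly_fun.mult[OF poly_fun.add[OF C3_C4[OF h(2)] poly_fun.mult[OF C4_coord C3_C4[OF h(3)]]] h(5)]]
      poly_fun.mult[OF C3_C4[OF h(3)] C3_C4[OF h(7)]]]
  note B = poly_fun.add[OF poly_fun.mult[OF h(2) h(6)] poly_fun.mult[OF E4_C3 poly_fun.mult[OF h(3) h(7)]]]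
  note C = poly_fun.add[OF poly_fun.mult[OF h(2) h(7)] poly_fun.mult[OF h(3) h(6)]]
  show ?case
    apply (rule exI[of _ "\<lambda>x. q x * p' x + (r0 x + x$1 * r1 x) * q' x + r1 x * r1' x"],
        rule exI[of _ "\<lambda>x. r0 x * r0' x + E4 x * (r1 x * r1' x)"],
        rule exI[of _ "\<lambda>x. r0 x * r1' x + r1 x * r0' x"])
    using A B C eq by simp
qed

lemma ff_phi: "ff (phi M) = 0"
  by (simp add: ff_def phi_comp delta_eq tt_eq aa_eq bb_eq field_simps power2_eq_square)
     (simp add: algebra_simps)?

lemma part2: assumes "poly_C4 p"
  shows "(\<forall>M. p (phi M) = 0) \<longleftrightarrow> (\<exists>q. poly_C4 q \<and> (\<forall>x. p x = ff x * q x))"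
proof
  assume "\<exists>q. poly_C4 q \<and> (\<forall>x. p x = ff x * q x)"
  then show "\<forall>M. p (phi M) = 0" by (auto simp: ff_phi)
next
  assume Z: "\<forall>M. p (phi M) = 0"
  have pC: "poly_fun C4 p" using assms by (simp add: poly_C4_eq)
  obtain q r0 r1 where h: "poly_fun C4 q" "poly_fun C3 r0" "poly_fun C3 r1"
    "\<forall>x. p x = ff x * q x + r0 x + x$1 * r1 x" using division[OF pC] by metis
  have pz: "p y = 0" if "y$2 + y$3 \<noteq> 0" "ff y = 0" for y
    using Z[rule_format, of "slice 1 y"] phi_slice[of 1 y] that by simp
  have loc: "r0 y = 0 \<and> r1 y = 0" if "H4 y \<noteq> 0" for y
  proof -
    have T: "y$2 + y$3 \<noteq> 0" and E: "E4 y \<noteq> 0" using that by (auto simp: H4_def E4_def)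
    define d where "d = csqrt (E4 y)"
    have d2: "d^2 = E4 y" by (simp add: d_def)
    with E have dnz: "d \<noteq> 0" by auto
    have "ff (upd y d) = 0" "ff (upd y (-d)) = 0" using d2 by (simp_all add: ff_E4 E4_def)
    then have "p (upd y d) = 0" "p (upd y (-d)) = 0" using pz T by simp_all
    then have "r0 y + d * r1 y = 0" "r0 y - d * r1 y = 0"
      using h(4) \<open>ff (upd y d) = 0\<close> \<open>ff (upd y (-d)) = 0\<close> C3_indep[OF h(2)] C3_indep[OF h(3)]
      by (metis add_0 mult_minus_left diff_conv_add_uminus upd_simps(1) mult_zero_left)+
    then have "2 * d * r1 y = 0" by (metis diff_add_cancel add_diff_add mult_2 mult.assoc diff_self add_diff_cancel)
    then have "r1 y = 0" using dnz by simp
    then show ?thesis using \<open>r0 y + d * r1 y = 0\<close> by simp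
  qed
  have r0: "r0 y = (\<lambda>_. 0) y" and r1: "r1 y = (\<lambda>_. 0) y" for y
  proof -
    show "r0 y = (\<lambda>_. 0) y"
    proof (rule dense_eq[where H=H4])
      show "continuous_on UNIV r0" by (rule C4_cont[OF C3_C4[OF h(2)]])
      show "continuous_on UNIV (\<lambda>_. 0::complex)" by simp
      show "H4 x \<noteq> 0 \<Longrightarrow> r0 x = 0" for x using loc by blast
      show "e > 0 \<Longrightarrow> \<exists>z. dist z x < e \<and> H4 z \<noteq> 0" for x e by (rule H4_approx)
    qed
    show "r1 y = (\<lambda>_. 0) y"
    proof (rule dense_eq[where H=H4])
      show "continuous_on UNIV r1" by (rule C4_cont[OF C3_C4[OF h(3)]])
      show "continuous_on UNIV (\<lambda>_. 0::complex)" by simp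
      show "H4 x \<noteq> 0 \<Longrightarrow> r1 x = 0" for x using loc by blast
      show "e > 0 \<Longrightarrow> \<exists>z. dist z x < e \<and> H4 z \<noteq> 0" for x e by (rule H4_approx)
    qed
  qed
  show "\<exists>q. poly_C4 q \<and> (\<forall>x. p x = ff x * q x)"
    using h(1,4) r0 r1 by (auto simp: poly_C4_eq)
qed


theorem proposition7p3:
  shows
    \<comment> \<open>the coordinates delta, t, a, b are invariant under the left action\<close>
    "(\<forall>g\<in>SO2. \<forall>M. phi (g ** M) = phi M)
    \<comment> \<open>injectivity / well-definedness: p o phi = 0 iff f divides p\<close>
   \<and> (\<forall>p. poly_C4 p \<longrightarrow>
        ((\<forall>M. p (phi M) = 0) \<longleftrightarrow> (\<exists>q. poly_C4 q \<and> (\<forall>x. p x = ff x * q x))))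
    \<comment> \<open>surjectivity: every SO2-invariant rational function P/Q on M_2 is (p/q) o phi\<close>
   \<and> (\<forall>P Q. poly_M2 P \<and> poly_M2 Q \<and> (\<exists>M. Q M \<noteq> 0) \<and>
        (\<forall>g\<in>SO2. \<forall>M. P (g ** M) * Q M = P M * Q (g ** M)) \<longrightarrow>
        (\<exists>p q. poly_C4 p \<and> poly_C4 q \<and> (\<exists>M. q (phi M) \<noteq> 0) \<and>
               (\<forall>M. P M * q (phi M) = Q M * p (phi M))))
    \<comment> \<open>identification PSO2 = SO2/{+-I} with SO2 via +-h |-> h^2\<close>
   \<and> (\<forall>h\<in>SO2. h ** h \<in> SO2)
   \<and> (\<forall>k\<in>SO2. \<exists>h\<in>SO2. h ** h = k)
   \<and> (\<forall>h\<in>SO2. \<forall>k\<in>SO2. h ** h = k ** k \<longleftrightarrow> (k = h \<or> k = - h))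
    \<comment> \<open>induced right action M |-> M h^-1 on delta, t, (a,b)^t\<close>
   \<and> (\<forall>h\<in>SO2. \<forall>M.
        delta (M ** matrix_inv h) = delta M \<and> tt (M ** matrix_inv h) = tt M \<and>
        vector [aa (M ** matrix_inv h), bb (M ** matrix_inv h)]
          = (h ** h) *v (vector [aa M, bb M] :: complex^2))"
  proof (intro conjI)
  show "\<forall>g\<in>SO2. \<forall>M. phi (g ** M) = phi M" using part1 by blast
  show "\<forall>p. poly_C4 p \<longrightarrow>
        ((\<forall>M. p (phi M) = 0) \<longleftrightarrow> (\<exists>q. poly_C4 q \<and> (\<forall>x. p x = ff x * q x)))"
    using part2 by blast
  show "\<forall>P Q. poly_M2 P \<and> poly_M2 Q \<and> (\<exists>M. Q M \<noteq> 0) \<and>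
        (\<forall>g\<in>SO2. \<forall>M. P (g ** M) * Q M = P M * Q (g ** M)) \<longrightarrow>
        (\<exists>p q. poly_C4 p \<and> poly_C4 q \<and> (\<exists>M. q (phi M) \<noteq> 0) \<and>
               (\<forall>M. P M * q (phi M) = Q M * p (phi M)))"
    using part3 by blast
  show "\<forall>h\<in>SO2. h ** h \<in> SO2" using part4 by blast
  show "\<forall>k\<in>SO2. \<exists>h\<in>SO2. h ** h = k" using part5 by blast
  show "\<forall>h\<in>SO2. \<forall>k\<in>SO2. h ** h = k ** k \<longleftrightarrow> (k = h \<or> k = - h)" using part6 by blast
  show "\<forall>h\<in>SO2. \<forall>M.
        delta (M ** matrix_inv h) = delta M \<and> tt (M ** matrix_inv h) = tt M \<and>
        vector [aa (M ** matrix_inv h), bb (M ** matrix_inv h)]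
          = (h ** h) *v (vector [aa M, bb M] :: complex^2)" using part7 by blast
qed

end
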